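(* For every $r>0$ there is a constant $C_r$ depending only on $r$ such that for every finite connected undirected unweighted graph $G=(V,E)$ with $n$ vertices and every initial mutant set $S_0\subseteq V$, the expected absorption time of the $\lambda$-mixed Moran process with $\lambda=1/2$ and fitness $r$ started from $S_0$ is at most $C_r n^4$ (i.e., it is $O_r(n^4)$).
   Context: The $\lambda$-mixed Moran process on a connected graph $G=(V,E)$ with $n=|V|\ge 2$: each vertex hosts a resident (fitness $1$) or mutant (fitness $r>0$); the state is the mutant set $S_t\subseteq V$. Each step, independently: with probability $\lambda$ a Birth-death step (a vertex $u$ chosen with probability proportional to fitness among all vertices; a uniformly random neighbor of $u$ takes $u$'s type); with probability $1-\lambda$ a death-Birth step (a uniformly random vertex $v$ dies; a neighbor $u$ of $v$ chosen with probability proportional to fitness among the neighbors of $v$; $v$ takes $u$'s type). The absorption time is the expected number of steps until $S_t\in\{\emptyset,V\}$. *)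

theory Defs
  imports Complex_Main "HOL-Library.Extended_Nonnegative_Real"
begin

definition connected_graph :: "nat set \<Rightarrow> (nat \<Rightarrow> nat \<Rightarrow> bool) \<Rightarrow> bool" where
  "connected_graph V E \<longleftrightarrow> finite V \<and> V \<noteq> {}
     \<and> (\<forall>u v. E u v \<longrightarrow> u \<in> V \<and> v \<in> V)
     \<and> (\<forall>u v. E u v \<longrightarrow> E v u)
     \<and> (\<forall>u. \<not> E u u)
     \<and> (\<forall>u\<in>V. \<forall>v\<in>V. E\<^sup>*\<^sup>* u v)"

definition nbrs :: "nat set \<Rightarrow> (nat \<Rightarrow> nat \<Rightarrow> bool) \<Rightarrow> nat \<Rightarrow> nat set" where
  "nbrs V E u = {v \<in> V. E u v}"

definition fit :: "real \<Rightarrow> nat set \<Rightarrow> nat \<Rightarrow> real" where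
  "fit r S u = (if u \<in> S then r else 1)"

definition upd :: "nat set \<Rightarrow> nat \<Rightarrow> nat \<Rightarrow> nat set" where
  "upd S u v = (if u \<in> S then insert v S else S - {v})"

definition mixed_kernel ::
  "real \<Rightarrow> real \<Rightarrow> nat set \<Rightarrow> (nat \<Rightarrow> nat \<Rightarrow> bool) \<Rightarrow> nat set \<Rightarrow> nat set \<Rightarrow> real" where
  "mixed_kernel lam r V E S S' =
     lam * (\<Sum>u\<in>V. \<Sum>v\<in>nbrs V E u.
        (fit r S u / (\<Sum>w\<in>V. fit r S w)) * (1 / real (card (nbrs V E u)))
        * (if upd S u v = S' then 1 else 0))
   + (1 - lam) * (\<Sum>v\<in>V. \<Sum>u\<in>nbrs V E v.
        (1 / real (card V)) * (fit r S u / (\<Sum>w\<in>nbrs V E v. fit r S w))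
        * (if upd S u v = S' then 1 else 0))"

fun state_dist ::
  "real \<Rightarrow> real \<Rightarrow> nat set \<Rightarrow> (nat \<Rightarrow> nat \<Rightarrow> bool) \<Rightarrow> nat set \<Rightarrow> nat \<Rightarrow> nat set \<Rightarrow> real" where
  "state_dist lam r V E S0 0 S = (if S = S0 then 1 else 0)"
| "state_dist lam r V E S0 (Suc t) S' =
     (\<Sum>S\<in>Pow V. state_dist lam r V E S0 t S * mixed_kernel lam r V E S S')"

text \<open>Probability that the process is not yet absorbed after t steps (the absorbing
  states {} and V are absorbing for the chain, so this equals P(T > t)).\<close>
definition not_absorbed ::
  "real \<Rightarrow> real \<Rightarrow> nat set \<Rightarrow> (nat \<Rightarrow> nat \<Rightarrow> bool) \<Rightarrow> nat set \<Rightarrow> nat \<Rightarrow> real" where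
  "not_absorbed lam r V E S0 t = (\<Sum>S\<in>Pow V - {{}, V}. state_dist lam r V E S0 t S)"

text \<open>Expected absorption time E[T] = sum_{t>=0} P(T > t), in [0, infinity].\<close>
definition absorption_time ::
  "real \<Rightarrow> real \<Rightarrow> nat set \<Rightarrow> (nat \<Rightarrow> nat \<Rightarrow> bool) \<Rightarrow> nat set \<Rightarrow> ennreal" where
  "absorption_time lam r V E S0 = (\<Sum>t. ennreal (not_absorbed lam r V E S0 t))"

end

theory Submission imports Defs begin

lemma delta2:
  fixes c :: "'i \<Rightarrow> 'j \<Rightarrow> real" and h :: "'s \<Rightarrow> real"
  assumes "finite A" "finite I" "\<And>i. i \<in> I \<Longrightarrow> finite (J i)"
    "\<And>i j. i \<in> I \<Longrightarrow> j \<in> J i \<Longrightarrow> g i j \<in> A"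
  shows "(\<Sum>S\<in>A. (\<Sum>i\<in>I. \<Sum>j\<in>J i. c i j * (if g i j = S then 1 else 0)) * h S)
       = (\<Sum>i\<in>I. \<Sum>j\<in>J i. c i j * h (g i j))"
proof -
  have "(\<Sum>S\<in>A. (\<Sum>i\<in>I. \<Sum>j\<in>J i. c i j * (if g i j = S then 1 else 0)) * h S)
      = (\<Sum>S\<in>A. \<Sum>i\<in>I. \<Sum>j\<in>J i. c i j * (if g i j = S then 1 else 0) * h S)"
    by (simp add: sum_distrib_right)
  also have "\<dots> = (\<Sum>i\<in>I. \<Sum>S\<in>A. \<Sum>j\<in>J i. c i j * (if g i j = S then 1 else 0) * h S)"
    by (rule sum.swap)
  also have "\<dots> = (\<Sum>i\<in>I. \<Sum>j\<in>J i. \<Sum>S\<in>A. c i j * (if g i j = S then 1 else 0) * h S)"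
    by (simp add: sum.swap[of _ A])
  also have "\<dots> = (\<Sum>i\<in>I. \<Sum>j\<in>J i. c i j * h (g i j))"
  proof (rule sum.cong[OF refl], rule sum.cong[OF refl])
    fix i j assume "i \<in> I" "j \<in> J i"
    then have "g i j \<in> A" by (rule assms(4))
    have "(\<Sum>S\<in>A. c i j * (if g i j = S then 1 else 0) * h S) = (\<Sum>S\<in>A. if g i j = S then c i j * h S else 0)"
      by (rule sum.cong) auto
    also have "\<dots> = c i j * h (g i j)" using \<open>g i j \<in> A\<close> assms(1) by (simp add: sum.delta)
    finally show "(\<Sum>S\<in>A. c i j * (if g i j = S then 1 else 0) * h S) = c i j * h (g i j)" .
  qed
  finally show ?thesis .
qed

lemma upd_sub: "S \<subseteq> V \<Longrightarrow> v \<in> V \<Longrightarrow> upd S u v \<subseteq> V"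
  by (auto simp: upd_def)

lemma nbrs_sum: "finite V \<Longrightarrow> (\<Sum>v\<in>nbrs V E u. g v) = (\<Sum>v\<in>V. if E u v then g v else 0)"
  by (simp add: nbrs_def sum.inter_filter)

definition FF where "FF r V S = (\<Sum>w\<in>V. fit r S w)"
definition Fv where "Fv r V E S v = (\<Sum>w\<in>nbrs V E v. fit r S w)"
definition WW where "WW r V E S u v =
   (1/2) * ((fit r S u / FF r V S) * (1 / real (card (nbrs V E u))))
 + (1/2) * ((1 / real (card V)) * (fit r S u / Fv r V E S v))"

lemma K_expand:
  assumes cg: "connected_graph V E" and SV: "S \<subseteq> V"
  shows "(\<Sum>S'\<in>Pow V. mixed_kernel (1/2) r V E S S' * h S')
       = (\<Sum>u\<in>V. \<Sum>v\<in>V. if E u v then WW r V E S u v * h (upd S u v) else 0)"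
proof -
  have fin: "finite V" using cg by (simp add: connected_graph_def)
  have sym: "\<And>u v. E u v = E v u" using cg unfolding connected_graph_def by blast
  have finN: "\<And>u. finite (nbrs V E u)" using fin by (simp add: nbrs_def)
  have inP: "\<And>u v. v \<in> nbrs V E u \<Longrightarrow> upd S u v \<in> Pow V" using SV by (auto simp: nbrs_def upd_def)
  have inV: "\<And>u v. E u v \<Longrightarrow> u \<in> V \<and> v \<in> V" using cg unfolding connected_graph_def by blast
  have inP2: "\<And>u v. u \<in> nbrs V E v \<Longrightarrow> upd S u v \<in> Pow V" using SV inV by (auto simp: nbrs_def upd_def)
  define X where "X S' = (\<Sum>u\<in>V. \<Sum>v\<in>nbrs V E u.
        (fit r S u / (\<Sum>w\<in>V. fit r S w)) * (1 / real (card (nbrs V E u)))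
        * (if upd S u v = S' then 1 else 0))" for S'
  define Y where "Y S' = (\<Sum>v\<in>V. \<Sum>u\<in>nbrs V E v.
        (1 / real (card V)) * (fit r S u / (\<Sum>w\<in>nbrs V E v. fit r S w))
        * (if upd S u v = S' then 1 else 0))" for S'
  have "(\<Sum>S'\<in>Pow V. mixed_kernel (1/2) r V E S S' * h S')
      = (1/2) * (\<Sum>S'\<in>Pow V. X S' * h S') + (1/2) * (\<Sum>S'\<in>Pow V. Y S' * h S')"
    unfolding mixed_kernel_def X_def[symmetric] Y_def[symmetric]
    by (simp add: sum_distrib_left sum.distrib[symmetric] algebra_simps)
  also have "(\<Sum>S'\<in>Pow V. X S' * h S') = (\<Sum>u\<in>V. \<Sum>v\<in>nbrs V E u.
        ((fit r S u / (\<Sum>w\<in>V. fit r S w)) * (1 / real (card (nbrs V E u)))) * h (upd S u v))"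
    unfolding X_def
    by (rule delta2) (use fin finN inP in auto)
  also have "\<dots> = (\<Sum>u\<in>V. \<Sum>v\<in>V. if E u v then 
        ((fit r S u / FF r V S) * (1 / real (card (nbrs V E u)))) * h (upd S u v) else 0)"
    unfolding FF_def by (simp only: nbrs_sum[OF fin])
  also have "(\<Sum>S'\<in>Pow V. Y S' * h S') = (\<Sum>v\<in>V. \<Sum>u\<in>nbrs V E v.
        ((1 / real (card V)) * (fit r S u / (\<Sum>w\<in>nbrs V E v. fit r S w))) * h (upd S u v))"
    unfolding Y_def
    by (rule delta2) (use fin finN inP2 in auto)
  also have "\<dots> = (\<Sum>v\<in>V. \<Sum>u\<in>V. if E u v then 
        ((1 / real (card V)) * (fit r S u / Fv r V E S v)) * h (upd S u v) else 0)"
    unfolding Fv_def[symmetric] unfolding nbrs_sum[OF fin] by (intro sum.cong refl) (use sym in auto)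
  also have "\<dots> = (\<Sum>u\<in>V. \<Sum>v\<in>V. if E u v then 
        ((1 / real (card V)) * (fit r S u / Fv r V E S v)) * h (upd S u v) else 0)"
    by (rule sum.swap)
  finally show ?thesis
    by (simp add: sum_distrib_left sum.distrib[symmetric] WW_def algebra_simps if_distrib cong: if_cong)
qed

lemma fit_bounds: "min 1 r \<le> fit r S w" "fit r S w \<le> max 1 r"
  by (auto simp: fit_def)

lemma sum_fit_bounds:
  assumes "finite A"
  shows "real (card A) * min 1 r \<le> (\<Sum>w\<in>A. fit r S w)"
        "(\<Sum>w\<in>A. fit r S w) \<le> real (card A) * max 1 r"
proof -
  have "(\<Sum>w\<in>A. min 1 r) \<le> (\<Sum>w\<in>A. fit r S w)" by (rule sum_mono) (rule fit_bounds)
  then show "real (card A) * min 1 r \<le> (\<Sum>w\<in>A. fit r S w)" by simp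
  have "(\<Sum>w\<in>A. fit r S w) \<le> (\<Sum>w\<in>A. max 1 r)" by (rule sum_mono) (rule fit_bounds)
  then show "(\<Sum>w\<in>A. fit r S w) \<le> real (card A) * max 1 r" by simp
qed

lemma nbrs_ne:
  assumes cg: "connected_graph V E" and n2: "card V \<ge> 2" and u: "u \<in> V"
  shows "nbrs V E u \<noteq> {}"
proof -
  have fin: "finite V" using cg by (simp add: connected_graph_def)
  obtain w where w: "w \<in> V" "w \<noteq> u"
  proof -
    have "\<not> V \<subseteq> {u}" using n2 fin by (metis card_mono card.empty card.insert empty_iff finite.intros(1) insert_absorb le_antisym not_numeral_le_zero numeral_le_one_iff semiring_norm(69) subset_singletonD card_1_singleton_iff One_nat_def)
    then show ?thesis using that by blast
  qed
  have "E\<^sup>*\<^sup>* u w" using cg u w unfolding connected_graph_def by blast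
  then obtain y where "E u y" using w(2) by (metis converse_rtranclpE)
  moreover have "y \<in> V" using cg \<open>E u y\<close> unfolding connected_graph_def by blast
  ultimately show ?thesis by (auto simp: nbrs_def)
qed

lemma boundary_edge:
  assumes "E\<^sup>*\<^sup>* a b" "a \<in> S" "b \<notin> S"
  shows "\<exists>u v. E u v \<and> u \<in> S \<and> v \<notin> S"
  using assms by (induction rule: rtranclp_induct) auto

lemma W_sum:
  assumes cg: "connected_graph V E" and n2: "card V \<ge> 2" and r: "r > 0"
  shows "(\<Sum>u\<in>V. \<Sum>v\<in>V. if E u v then WW r V E S u v else 0) = 1"
proof -
  have fin: "finite V" using cg by (simp add: connected_graph_def)
  have sym: "\<And>u v. E u v = E v u" using cg unfolding connected_graph_def by blast
  have mpos: "min 1 r > 0" using r by simp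
  have np: "real (card V) > 0" using n2 by simp
  have dpos: "\<And>u. u \<in> V \<Longrightarrow> real (card (nbrs V E u)) > 0"
    using nbrs_ne[OF cg n2] fin by (simp add: nbrs_def card_gt_0_iff)
  have Fpos: "FF r V S > 0" unfolding FF_def
    using sum_fit_bounds(1)[OF fin, of r S] np mpos by (smt (verit) mult_pos_pos)
  have Fvpos: "Fv r V E S v > 0" if v: "v \<in> V" for v
  proof -
    have "finite (nbrs V E v)" using fin by (simp add: nbrs_def)
    from sum_fit_bounds(1)[OF this, of r S] have "real (card (nbrs V E v)) * min 1 r \<le> Fv r V E S v"
      by (simp add: Fv_def)
    moreover have "real (card (nbrs V E v)) * min 1 r > 0" using dpos[OF v] mpos by simp
    ultimately show ?thesis by linarith
  qed
  have "(\<Sum>u\<in>V. \<Sum>v\<in>V. if E u v then WW r V E S u v else 0)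
     = (1/2) * (\<Sum>u\<in>V. \<Sum>v\<in>V. if E u v then (fit r S u / FF r V S) * (1 / real (card (nbrs V E u))) else 0)
     + (1/2) * (\<Sum>u\<in>V. \<Sum>v\<in>V. if E u v then (1 / real (card V)) * (fit r S u / Fv r V E S v) else 0)"
    unfolding sum_distrib_left sum.distrib[symmetric]
    by (intro sum.cong refl) (simp add: WW_def)
  also have "(\<Sum>u\<in>V. \<Sum>v\<in>V. if E u v then (fit r S u / FF r V S) * (1 / real (card (nbrs V E u))) else 0) = 1"
  proof -
    have "(\<Sum>u\<in>V. \<Sum>v\<in>V. if E u v then (fit r S u / FF r V S) * (1 / real (card (nbrs V E u))) else 0)
        = (\<Sum>u\<in>V. fit r S u / FF r V S)"
    proof (rule sum.cong[OF refl])
      fix u assume u: "u \<in> V"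
      have "(\<Sum>v\<in>V. if E u v then (fit r S u / FF r V S) * (1 / real (card (nbrs V E u))) else 0)
          = (\<Sum>v\<in>nbrs V E u. (fit r S u / FF r V S) * (1 / real (card (nbrs V E u))))"
        by (simp only: nbrs_sum[OF fin])
      also have "\<dots> = fit r S u / FF r V S" using dpos[OF u] by simp
      finally show "(\<Sum>v\<in>V. if E u v then (fit r S u / FF r V S) * (1 / real (card (nbrs V E u))) else 0) = fit r S u / FF r V S" .
    qed
    also have "\<dots> = 1" using Fpos by (simp add: sum_divide_distrib[symmetric] FF_def)
    finally show ?thesis .
  qed
  also have "(\<Sum>u\<in>V. \<Sum>v\<in>V. if E u v then (1 / real (card V)) * (fit r S u / Fv r V E S v) else 0) = 1"
  proof -
    have "(\<Sum>u\<in>V. \<Sum>v\<in>V. if E u v then (1 / real (card V)) * (fit r S u / Fv r V E S v) else 0)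
       = (\<Sum>v\<in>V. \<Sum>u\<in>V. if E u v then (1 / real (card V)) * (fit r S u / Fv r V E S v) else 0)"
      by (rule sum.swap)
    also have "\<dots> = (\<Sum>v\<in>V. 1 / real (card V))"
    proof (rule sum.cong[OF refl])
      fix v assume v: "v \<in> V"
      have "(\<Sum>u\<in>V. if E u v then (1 / real (card V)) * (fit r S u / Fv r V E S v) else 0)
          = (\<Sum>u\<in>V. (1 / real (card V)) / Fv r V E S v * (if E v u then fit r S u else 0))"
        by (rule sum.cong[OF refl]) (auto simp: sym[of v])
      also have "\<dots> = (1 / real (card V)) / Fv r V E S v * Fv r V E S v"
        by (simp only: sum_distrib_left[symmetric] Fv_def nbrs_sum[OF fin])
      also have "\<dots> = 1 / real (card V)" using Fvpos[OF v] by simp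
      finally show "(\<Sum>u\<in>V. if E u v then (1 / real (card V)) * (fit r S u / Fv r V E S v) else 0) = 1 / real (card V)" .
    qed
    also have "\<dots> = 1" using np by simp
    finally show ?thesis .
  qed
  finally show ?thesis by simp
qed

lemma alg1:
  fixes n du dv F G f :: real
  assumes "n > 0" "du > 0" "dv > 0" "F > 0" "G > 0" "F \<le> f * n" "G \<le> f * dv"
  shows "(1/2)*((1/n)*(1/du)) + (1/2)*((1/n)*(1/dv)) \<le> (1/2)*((f/F)*(1/du)) + (1/2)*((1/n)*(f/G))"
proof -
  have a: "1/n \<le> f/F" using assms by (simp add: field_simps)
  have b: "1/dv \<le> f/G" using assms by (simp add: field_simps)
  have "(1/n)*(1/du) \<le> (f/F)*(1/du)" using a assms by (intro mult_right_mono) auto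
  moreover have "(1/n)*(1/dv) \<le> (1/n)*(f/G)" using b assms by (intro mult_left_mono) auto
  ultimately show ?thesis by linarith
qed

lemma alg2:
  fixes n du dv F G f :: real
  assumes "n > 0" "du > 0" "dv > 0" "F > 0" "G > 0" "f * n \<le> F" "f * dv \<le> G"
  shows "(1/2)*((f/F)*(1/du)) + (1/2)*((1/n)*(f/G)) \<le> (1/2)*((1/n)*(1/du)) + (1/2)*((1/n)*(1/dv))"
proof -
  have a: "f/F \<le> 1/n" using assms by (simp add: field_simps)
  have b: "f/G \<le> 1/dv" using assms by (simp add: field_simps)
  have "(f/F)*(1/du) \<le> (1/n)*(1/du)" using a assms by (intro mult_right_mono) auto
  moreover have "(1/n)*(f/G) \<le> (1/n)*(1/dv)" using b assms by (intro mult_left_mono) auto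
  ultimately show ?thesis by linarith
qed

definition dl :: "nat set \<Rightarrow> nat \<Rightarrow> nat \<Rightarrow> real" where
  "dl S u v = (if u \<in> S \<and> v \<notin> S then 1 else if u \<notin> S \<and> v \<in> S then -1 else 0)"
definition eps :: "real \<Rightarrow> real" where "eps r = (if 1 \<le> r then 1 else -1)"
definition ss where "ss V E u v =
  (1/2)*((1/real (card V))*(1/real (card (nbrs V E u)))) + (1/2)*((1/real (card V))*(1/real (card (nbrs V E v))))"

lemma basic_facts:
  assumes cg: "connected_graph V E" and n2: "card V \<ge> 2" and r: "r > 0" and u: "u \<in> V"
  shows "real (card V) > 0" "real (card (nbrs V E u)) > 0"
    "real (card V) * min 1 r \<le> FF r V S" "FF r V S \<le> real (card V) * max 1 r"
    "real (card (nbrs V E u)) * min 1 r \<le> Fv r V E S u" "Fv r V E S u \<le> real (card (nbrs V E u)) * max 1 r"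
    "FF r V S > 0" "Fv r V E S u > 0" "real (card (nbrs V E u)) \<le> real (card V)"
proof -
  have fin: "finite V" using cg by (simp add: connected_graph_def)
  have finN: "finite (nbrs V E u)" using fin by (simp add: nbrs_def)
  have mpos: "min 1 r > 0" using r by simp
  show np: "real (card V) > 0" using n2 by simp
  show dp: "real (card (nbrs V E u)) > 0"
    using nbrs_ne[OF cg n2 u] finN by (simp add: card_gt_0_iff)
  show f1: "real (card V) * min 1 r \<le> FF r V S" "FF r V S \<le> real (card V) * max 1 r"
    unfolding FF_def using sum_fit_bounds[OF fin] by auto
  show f2: "real (card (nbrs V E u)) * min 1 r \<le> Fv r V E S u" "Fv r V E S u \<le> real (card (nbrs V E u)) * max 1 r"
    unfolding Fv_def using sum_fit_bounds[OF finN] by auto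
  have "real (card V) * min 1 r > 0" using np mpos by simp
  then show "FF r V S > 0" using f1 by linarith
  have "real (card (nbrs V E u)) * min 1 r > 0" using dp mpos by simp
  then show "Fv r V E S u > 0" using f2 by linarith
  have "nbrs V E u \<subseteq> V" by (auto simp: nbrs_def)
  then show "real (card (nbrs V E u)) \<le> real (card V)" using fin by (simp add: card_mono)
qed

lemma ptw:
  assumes cg: "connected_graph V E" and n2: "card V \<ge> 2" and r: "r > 0" and e: "E u v"
  shows "ss V E u v * (eps r * dl S u v) \<le> WW r V E S u v * (eps r * dl S u v)"
proof -
  have uv: "u \<in> V" "v \<in> V" using cg e unfolding connected_graph_def by blast+
  note bu = basic_facts[OF cg n2 r uv(1)] and bv = basic_facts[OF cg n2 r uv(2)]
  have A: "ss V E u v \<le> WW r V E S u v" if "F' \<le> f * real (card V)" "G' \<le> f * real (card (nbrs V E v))"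
     "f = fit r S u" "F' = FF r V S" "G' = Fv r V E S v" for f F' G'
    unfolding ss_def WW_def using alg1[of "real (card V)" "real (card (nbrs V E u))" "real (card (nbrs V E v))" F' G' f] that bu bv by simp
  have B: "WW r V E S u v \<le> ss V E u v" if "f * real (card V) \<le> F'" "f * real (card (nbrs V E v)) \<le> G'"
     "f = fit r S u" "F' = FF r V S" "G' = Fv r V E S v" for f F' G'
    unfolding ss_def WW_def using alg2[of "real (card V)" "real (card (nbrs V E u))" "real (card (nbrs V E v))" F' G' f] that bu bv by simp
  show ?thesis
  proof (cases "1 \<le> r")
    case True
    show ?thesis
    proof (cases "u \<in> S \<and> v \<notin> S")
      case c: True
      have "ss V E u v \<le> WW r V E S u v"
        by (rule A[of _ r]) (use True c bu bv in \<open>auto simp: fit_def mult.commute\<close>)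
      then show ?thesis using True c by (simp add: eps_def dl_def)
    next
      case c: False
      show ?thesis
      proof (cases "u \<notin> S \<and> v \<in> S")
        case d: True
        have "WW r V E S u v \<le> ss V E u v"
          by (rule B[of 1]) (use True d bu bv in \<open>auto simp: fit_def mult.commute\<close>)
        then show ?thesis using True c d by (simp add: eps_def dl_def)
      qed (use c in \<open>auto simp add: dl_def\<close>)
    qed
  next
    case False
    show ?thesis
    proof (cases "u \<in> S \<and> v \<notin> S")
      case c: True
      have "WW r V E S u v \<le> ss V E u v"
        by (rule B[of r]) (use False c bu bv in \<open>auto simp: fit_def mult.commute\<close>)
      then show ?thesis using False c by (simp add: eps_def dl_def)
    next
      case c: False
      show ?thesis
      proof (cases "u \<notin> S \<and> v \<in> S")
        case d: True
        have "ss V E u v \<le> WW r V E S u v"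
          by (rule A[of _ 1]) (use False d bu bv in \<open>auto simp: fit_def mult.commute\<close>)
        then show ?thesis using False c d by (simp add: eps_def dl_def)
      qed (use c in \<open>auto simp add: dl_def\<close>)
    qed
  qed
qed

definition cc :: "real \<Rightarrow> real" where "cc r = min 1 r / (2 * max 1 r)"
definition zz :: "real \<Rightarrow> nat set \<Rightarrow> nat set \<Rightarrow> real" where
  "zz r V S = (if 1 \<le> r then real (card V) + real (card S) else 2 * real (card V) - real (card S))"
definition aa :: "real \<Rightarrow> nat set \<Rightarrow> real" where "aa r V = real (card V) ^ 2 / cc r"
definition pot :: "real \<Rightarrow> nat set \<Rightarrow> nat set \<Rightarrow> real" where
  "pot r V S = aa r V * (4 * real (card V) ^ 2 - zz r V S ^ 2)"

lemma card_upd: "finite S \<Longrightarrow> real (card (upd S u v)) = real (card S) + dl S u v"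
proof -
  assume f: "finite S"
  show ?thesis
  proof (cases "u \<in> S")
    case True then show ?thesis using f by (simp add: upd_def dl_def card_insert_if)
  next
    case False
    show ?thesis
    proof (cases "v \<in> S")
      case True
      then have "card S \<ge> 1" using f by (simp add: Suc_le_eq card_gt_0_iff) blast
      then show ?thesis using f False True by (simp add: upd_def dl_def of_nat_diff)
    next
      case F2: False then show ?thesis using False by (simp add: upd_def dl_def)
    qed
  qed
qed

lemma pot_upd:
  assumes "finite S"
  shows "pot r V (upd S u v) = pot r V S - aa r V * (2 * zz r V S * (eps r * dl S u v) + (dl S u v)^2)"
proof -
  have z: "zz r V (upd S u v) = zz r V S + eps r * dl S u v"
    using card_upd[OF assms, of u v] by (simp add: zz_def eps_def)
  have e: "(eps r)^2 = 1" by (simp add: eps_def)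
  have "(zz r V S + eps r * dl S u v)^2 = zz r V S ^2 + 2 * zz r V S * (eps r * dl S u v) + (eps r)^2 * (dl S u v)^2"
    by (simp add: power2_eq_square algebra_simps)
  then show ?thesis unfolding pot_def z e by (simp add: algebra_simps)
qed

lemma antisym_sum:
  fixes g :: "nat \<Rightarrow> nat \<Rightarrow> real"
  assumes "\<And>u v. g u v = - g v u"
  shows "(\<Sum>u\<in>V. \<Sum>v\<in>V. g u v) = 0"
proof -
  have "(\<Sum>u\<in>V. \<Sum>v\<in>V. g u v) = (\<Sum>v\<in>V. \<Sum>u\<in>V. g u v)" by (rule sum.swap)
  also have "\<dots> = (\<Sum>v\<in>V. \<Sum>u\<in>V. - g v u)" by (intro sum.cong refl) (rule assms)
  also have "\<dots> = - (\<Sum>u\<in>V. \<Sum>v\<in>V. g u v)" by (simp add: sum_negf)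
  finally show ?thesis by linarith
qed

lemma WW_nonneg:
  assumes cg: "connected_graph V E" and n2: "card V \<ge> 2" and r: "r > 0" and e: "E u v"
  shows "WW r V E S u v \<ge> 0"
proof -
  have uv: "u \<in> V" "v \<in> V" using cg e unfolding connected_graph_def by blast+
  note bu = basic_facts[OF cg n2 r uv(1)] and bv = basic_facts[OF cg n2 r uv(2)]
  have "fit r S u \<ge> 0" using r by (simp add: fit_def)
  then show ?thesis unfolding WW_def using bu bv
    by (intro add_nonneg_nonneg mult_nonneg_nonneg divide_nonneg_nonneg) (auto intro: less_imp_le)
qed

lemma Q_bound:
  assumes cg: "connected_graph V E" and n2: "card V \<ge> 2" and r: "r > 0" and SV: "S \<subseteq> V"
    and ne: "S \<noteq> {}" "S \<noteq> V"
  shows "cc r / real (card V) ^ 2 \<le> (\<Sum>u\<in>V. \<Sum>v\<in>V. if E u v then WW r V E S u v * (dl S u v)^2 else 0)"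
proof -
  have fin: "finite V" using cg by (simp add: connected_graph_def)
  obtain a where a: "a \<in> S" using ne by blast
  obtain b where b: "b \<in> V" "b \<notin> S" using ne SV by blast
  have conn: "\<forall>u\<in>V. \<forall>v\<in>V. E\<^sup>*\<^sup>* u v" using cg by (simp add: connected_graph_def)
  have aV: "a \<in> V" using a SV by blast
  have "E\<^sup>*\<^sup>* a b" using conn aV b(1) by blast
  then obtain u0 v0 where e: "E u0 v0" "u0 \<in> S" "v0 \<notin> S" using boundary_edge[OF _ a b(2)] by blast
  have uv: "u0 \<in> V" "v0 \<in> V" using cg e unfolding connected_graph_def by blast+
  note bu = basic_facts[OF cg n2 r uv(1)]
  define g where "g u v = (if E u v then WW r V E S u v * (dl S u v)^2 else 0)" for u v
  have gnn: "g u v \<ge> 0" for u v unfolding g_def using WW_nonneg[OF cg n2 r] by simp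
  have "g u0 v0 \<le> (\<Sum>v\<in>V. g u0 v)" by (rule member_le_sum) (use uv gnn fin in auto)
  also have "\<dots> \<le> (\<Sum>u\<in>V. \<Sum>v\<in>V. g u v)"
    by (rule member_le_sum[where f="\<lambda>u. \<Sum>v\<in>V. g u v"]) (use uv gnn fin in \<open>auto intro: sum_nonneg\<close>)
  finally have 1: "WW r V E S u0 v0 \<le> (\<Sum>u\<in>V. \<Sum>v\<in>V. g u v)" using e by (simp add: g_def dl_def)
  have mpos: "min 1 r > 0" "max 1 r > 0" using r by auto
  have FFp: "FF r V S > 0" using bu(7) by blast
  have FFu: "FF r V S \<le> real (card V) * max 1 r" using bu(4) by blast
  have Fvp: "Fv r V E S v0 > 0" using basic_facts(8)[OF cg n2 r uv(2)] by blast
  have fnn: "fit r S u0 \<ge> 0" using r by (simp add: fit_def)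
  have f1: "min 1 r / (real (card V) * max 1 r) \<le> r / FF r V S"
    by (rule frac_le) (use r FFp FFu in \<open>simp_all\<close>)
  have f2: "1 / real (card V) \<le> 1 / real (card (nbrs V E u0))"
    by (rule frac_le) (use bu(2) bu(9) in \<open>simp_all\<close>)
  have "(min 1 r / (real (card V) * max 1 r)) * (1 / real (card V)) \<le> (r / FF r V S) * (1 / real (card (nbrs V E u0)))"
    by (rule mult_mono[OF f1 f2]) (use r FFp in \<open>simp_all add: divide_nonneg_pos less_imp_le\<close>)
  moreover have "cc r / real (card V) ^ 2 = (1/2) * ((min 1 r / (real (card V) * max 1 r)) * (1 / real (card V)))"
    unfolding cc_def power2_eq_square by simp
  moreover have "(1/2) * ((r / FF r V S) * (1 / real (card (nbrs V E u0)))) \<le> WW r V E S u0 v0"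
  proof -
    have x: "0 \<le> fit r S u0 / Fv r V E S v0" using fnn Fvp by (simp add: divide_nonneg_pos)
    have "0 \<le> (1/2) * ((1 / real (card V)) * (fit r S u0 / Fv r V E S v0))"
      by (intro mult_nonneg_nonneg) (simp_all add: x)
    then show ?thesis unfolding WW_def using e by (simp add: fit_def)
  qed
  ultimately show ?thesis using 1 unfolding g_def by linarith
qed

lemma drift:
  assumes cg: "connected_graph V E" and n2: "card V \<ge> 2" and r: "r > 0" and SV: "S \<subseteq> V"
  shows "(\<Sum>S'\<in>Pow V. mixed_kernel (1/2) r V E S S' * pot r V S')
           \<le> pot r V S - (if S = {} \<or> S = V then 0 else 1)"
proof -
  have fin: "finite V" using cg by (simp add: connected_graph_def)
  have finS: "finite S" using fin SV finite_subset by blast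
  have sym: "\<And>u v. E u v = E v u" using cg unfolding connected_graph_def by blast
  have np: "real (card V) > 0" using n2 by simp
  have ccp: "cc r > 0" using r by (simp add: cc_def)
  have aap: "aa r V > 0" using np ccp by (simp add: aa_def)
  have cS: "card S \<le> card V" using SV fin by (simp add: card_mono)
  have zp: "zz r V S \<ge> 0" using cS by (simp add: zz_def)
  define D where "D = (\<Sum>u\<in>V. \<Sum>v\<in>V. if E u v then WW r V E S u v * (eps r * dl S u v) else 0)"
  define Q where "Q = (\<Sum>u\<in>V. \<Sum>v\<in>V. if E u v then WW r V E S u v * (dl S u v)^2 else 0)"
  have "(\<Sum>S'\<in>Pow V. mixed_kernel (1/2) r V E S S' * pot r V S')
      = (\<Sum>u\<in>V. \<Sum>v\<in>V. if E u v then WW r V E S u v * pot r V (upd S u v) else 0)"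
    by (rule K_expand[OF cg SV])
  also have "\<dots> = (\<Sum>u\<in>V. \<Sum>v\<in>V. pot r V S * (if E u v then WW r V E S u v else 0)
        - 2 * aa r V * zz r V S * (if E u v then WW r V E S u v * (eps r * dl S u v) else 0)
        - aa r V * (if E u v then WW r V E S u v * (dl S u v)^2 else 0))"
    by (intro sum.cong refl) (simp add: pot_upd[OF finS] algebra_simps)
  also have "\<dots> = pot r V S * (\<Sum>u\<in>V. \<Sum>v\<in>V. if E u v then WW r V E S u v else 0)
        - 2 * aa r V * zz r V S * D - aa r V * Q"
    unfolding D_def Q_def by (simp add: sum_subtractf sum_distrib_left)
  also have "\<dots> = pot r V S - 2 * aa r V * zz r V S * D - aa r V * Q"
    using W_sum[OF cg n2 r] by simp
  finally have eq: "(\<Sum>S'\<in>Pow V. mixed_kernel (1/2) r V E S S' * pot r V S') = pot r V S - 2 * aa r V * zz r V S * D - aa r V * Q" .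
  have "0 = (\<Sum>u\<in>V. \<Sum>v\<in>V. if E u v then ss V E u v * (eps r * dl S u v) else 0)"
    by (rule antisym_sum[symmetric]) (auto simp: sym ss_def dl_def)
  also have "\<dots> \<le> D" unfolding D_def
    by (intro sum_mono) (use ptw[OF cg n2 r] in auto)
  finally have Dn: "D \<ge> 0" .
  have Qn: "Q \<ge> 0" unfolding Q_def using WW_nonneg[OF cg n2 r] by (intro sum_nonneg) auto
  have "2 * aa r V * zz r V S * D \<ge> 0" using aap zp Dn by simp
  moreover have "aa r V * Q \<ge> (if S = {} \<or> S = V then 0 else 1)"
  proof (cases "S = {} \<or> S = V")
    case True then show ?thesis using aap Qn by simp
  next
    case False
    have "aa r V * (cc r / real (card V) ^ 2) \<le> aa r V * Q"
      unfolding Q_def using Q_bound[OF cg n2 r SV] False aap by (intro mult_left_mono) auto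
    moreover have "aa r V * (cc r / real (card V) ^ 2) = 1" using np ccp by (simp add: aa_def)
    ultimately have "1 \<le> aa r V * Q" by linarith
    then show ?thesis using False by simp
  qed
  ultimately show ?thesis using eq by linarith
qed

lemma fit_nonneg: "r > 0 \<Longrightarrow> fit r S w \<ge> 0"
  by (simp add: fit_def)

lemma kernel_nonneg:
  assumes r: "r > 0"
  shows "mixed_kernel (1/2) r V E S S' \<ge> 0"
  unfolding mixed_kernel_def using fit_nonneg[OF r]
  by (intro add_nonneg_nonneg mult_nonneg_nonneg sum_nonneg divide_nonneg_nonneg) auto

lemma dist_nonneg:
  assumes r: "r > 0"
  shows "state_dist (1/2) r V E S0 t S \<ge> 0"
  by (induction t arbitrary: S) (auto intro!: sum_nonneg mult_nonneg_nonneg kernel_nonneg[OF r])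

lemma accumulate:
  assumes r: "r > 0" and S0: "S0 \<in> Pow V" and fin: "finite V"
    and dr: "\<And>S. S \<in> Pow V \<Longrightarrow> (\<Sum>S'\<in>Pow V. mixed_kernel (1/2) r V E S S' * f S')
                  \<le> f S - (if S = {} \<or> S = V then 0 else 1)"
    and fnn: "\<And>S. S \<in> Pow V \<Longrightarrow> f S \<ge> 0"
  shows "(\<Sum>t<N. not_absorbed (1/2) r V E S0 t) \<le> f S0"
proof -
  define P where "P t = (\<Sum>S\<in>Pow V. state_dist (1/2) r V E S0 t S * f S)" for t
  define ind where "ind S = (if S = {} \<or> S = V then 0 else (1::real))" for S :: "nat set"
  have finP: "finite (Pow V)" using fin by simp
  have na: "not_absorbed (1/2) r V E S0 t = (\<Sum>S\<in>Pow V. state_dist (1/2) r V E S0 t S * ind S)" for t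
  proof -
    have eq: "Pow V - {{}, V} = {S \<in> Pow V. \<not> (S = {} \<or> S = V)}" by auto
    show ?thesis unfolding not_absorbed_def eq sum.inter_filter[OF finP] ind_def
      by (intro sum.cong refl) simp
  qed
  have step: "P (Suc t) + not_absorbed (1/2) r V E S0 t \<le> P t" for t
  proof -
    have "P (Suc t) = (\<Sum>S'\<in>Pow V. \<Sum>S\<in>Pow V. state_dist (1/2) r V E S0 t S * (mixed_kernel (1/2) r V E S S' * f S'))"
      unfolding P_def by (simp add: sum_distrib_right mult.assoc)
    also have "\<dots> = (\<Sum>S\<in>Pow V. state_dist (1/2) r V E S0 t S * (\<Sum>S'\<in>Pow V. mixed_kernel (1/2) r V E S S' * f S'))"
      by (subst sum.swap) (simp add: sum_distrib_left)
    also have "\<dots> \<le> (\<Sum>S\<in>Pow V. state_dist (1/2) r V E S0 t S * (f S - ind S))"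
      by (intro sum_mono mult_left_mono) (use dr dist_nonneg[OF r] in \<open>auto simp: ind_def\<close>)
    also have "\<dots> = P t - not_absorbed (1/2) r V E S0 t"
      unfolding P_def na by (simp add: right_diff_distrib sum_subtractf)
    finally show ?thesis by linarith
  qed
  have calc: "P N + (\<Sum>t<N. not_absorbed (1/2) r V E S0 t) \<le> P 0" for N
  proof (induction N)
    case 0 show ?case by simp
  next
    case (Suc N) then show ?case using step[of N] by simp
  qed
  moreover have "P 0 = f S0"
  proof -
    have "P 0 = (\<Sum>S\<in>Pow V. if S0 = S then f S else 0)" unfolding P_def by (intro sum.cong refl) auto
    also have "\<dots> = f S0" using S0 by (simp add: sum.delta'[OF finP])
    finally show ?thesis .
  qed
  moreover have "P N \<ge> 0" unfolding P_def
    using fnn dist_nonneg[OF r] by (intro sum_nonneg mult_nonneg_nonneg) auto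
  ultimately show ?thesis using calc[of N] by linarith
qed

theorem mainTheorem5:
  fixes r :: real
  assumes "r > 0"
  shows "\<exists>C::real. \<forall>(V::nat set) E S0.
           connected_graph V E \<and> card V \<ge> 2 \<and> S0 \<subseteq> V \<longrightarrow>
           absorption_time (1/2) r V E S0 \<le> ennreal (C * real (card V) ^ 4)"
proof (intro exI allI impI)
  fix V :: "nat set" and E S0
  assume h: "connected_graph V E \<and> card V \<ge> 2 \<and> S0 \<subseteq> V"
  then have cg: "connected_graph V E" and n2: "card V \<ge> 2" and S0: "S0 \<subseteq> V" by auto
  have fin: "finite V" using cg by (simp add: connected_graph_def)
  have np: "real (card V) > 0" using n2 by simp
  have ccp: "cc r > 0" using assms by (simp add: cc_def)
  have aap: "aa r V > 0" using np ccp by (simp add: aa_def)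
  have zb: "0 \<le> zz r V S \<and> zz r V S \<le> 2 * real (card V)" if "S \<in> Pow V" for S
  proof -
    have "card S \<le> card V" using that fin by (simp add: card_mono)
    then show ?thesis by (auto simp: zz_def)
  qed
  have potnn: "pot r V S \<ge> 0" if "S \<in> Pow V" for S
  proof -
    have "zz r V S ^ 2 \<le> (2 * real (card V)) ^ 2" using zb[OF that] by (intro power_mono) auto
    then show ?thesis unfolding pot_def using aap by (simp add: power_mult_distrib)
  qed
  have potle: "pot r V S0 \<le> 4 / cc r * real (card V) ^ 4"
  proof -
    have "pot r V S0 \<le> aa r V * (4 * real (card V) ^ 2)" unfolding pot_def using aap
      by (intro mult_left_mono) auto
    also have "\<dots> = 4 / cc r * real (card V) ^ 4" by (simp add: aa_def power_numeral_reduce)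
    finally show ?thesis .
  qed
  define a where "a t = not_absorbed (1/2) r V E S0 t" for t
  have ann: "a t \<ge> 0" for t unfolding a_def not_absorbed_def
    using dist_nonneg[OF assms] by (intro sum_nonneg) auto
  have bnd: "(\<Sum>t<N. a t) \<le> pot r V S0" for N unfolding a_def
  proof (rule accumulate[OF assms _ fin])
    show "S0 \<in> Pow V" using S0 by simp
    show "\<And>S. S \<in> Pow V \<Longrightarrow> (\<Sum>S'\<in>Pow V. mixed_kernel (1/2) r V E S S' * pot r V S')
                  \<le> pot r V S - (if S = {} \<or> S = V then 0 else 1)"
      using drift[OF cg n2 assms] by simp
    show "\<And>S. S \<in> Pow V \<Longrightarrow> pot r V S \<ge> 0" by (rule potnn)
  qed
  have summ: "summable a"
  proof (rule bounded_imp_summable[OF ann, where B="pot r V S0"])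
    fix n show "(\<Sum>k\<le>n. a k) \<le> pot r V S0" using bnd[of "Suc n"] by (simp only: lessThan_Suc_atMost)
  qed
  have "absorption_time (1/2) r V E S0 = ennreal (\<Sum>t. a t)"
    unfolding absorption_time_def a_def[symmetric] by (rule suminf_ennreal2[OF ann summ])
  also have "\<dots> \<le> ennreal (4 / cc r * real (card V) ^ 4)"
  proof (rule ennreal_leI)
    have "(\<Sum>t. a t) \<le> pot r V S0" by (rule suminf_le_const[OF summ bnd])
    then show "(\<Sum>t. a t) \<le> 4 / cc r * real (card V) ^ 4" using potle by linarith
  qed
  finally show "absorption_time (1/2) r V E S0 \<le> ennreal (4 / cc r * real (card V) ^ 4)" .
qed

end
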